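(* Let $\{\rho_n\}_{n\ge0},\{\beta_n\}_{n\ge0},\{\tau_n\}_{n\ge0}$ be complex sequences with $\rho_n\ne0$, $\tau_n\neq0$ for $n\ge0$, $\beta_0\neq0,\pm1$, $\beta_n\neq0$ for $n\ge1$. Let $\mathcal{P}_0(\lambda)=1$, $\mathcal{P}_1(\lambda)=\rho_0(\lambda-\beta_0)$ and $\mathcal{P}_{n+1}(\lambda)=\rho_n(\lambda-\beta_n)\mathcal{P}_n(\lambda)+\tau_n\lambda\,\mathcal{P}_{n-1}(\lambda)$ for $n\ge1$. Let $\{\alpha_n\}_{n\ge0}$ be nonzero real numbers and put $\mathcal{Q}_0(\lambda)=1$, $\mathcal{Q}_n(\lambda)=\mathcal{P}_n(\lambda)+\alpha_n\mathcal{P}_{n-1}(\lambda)$ for $n\ge1$. Define for $n\ge1$ $$p_n=\alpha_{n-1}\rho_{n-1}-\tau_{n-1},\quad q_n=\alpha_{n-1}(\alpha_n-\rho_{n-1}\beta_{n-1}),\quad r_n=\rho_np_n,$$ $$s_n=\alpha_n^{-1}p_nq_{n+1}+\alpha_{n-1}(\tau_n-\rho_{n-1}\beta_{n-1}\rho_n),\quad t_n=-\alpha_n^{-1}\alpha_{n-1}\rho_{n-1}\beta_{n-1}q_{n+1},$$ and assume $p_{n+1}\neq0$ and $q_n\neq0$ for all $n\ge1$. Suppose the sequence $\{\alpha_n\}$ satisfies $$\alpha_n=-(\rho_{n-1}-\alpha_{n-1}^{-1}\tau_{n-1})+\rho_{n-1}\beta_{n-1},\quad n\ge2,$$ where $\alpha_1\neq\rho_0\beta_0$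 is arbitrary. If $\alpha_0=\tau_0\rho_0^{-1}$, then $\{\mathcal{Q}_n(\lambda)\}_{n\ge1}$ satisfies the mixed recurrence relations $$\mathcal{Q}_2(\lambda)=\frac{s_1}{q_1}\left(\lambda+\frac{t_1}{s_1}\right)\mathcal{Q}_1(\lambda)-\frac{\tau_0q_2}{q_1}\lambda(\lambda-1)\mathcal{Q}_0(\lambda),$$ $$\mathcal{Q}_{n+1}(\lambda)=\rho_n\left(\lambda-\frac{t_n}{r_n}\right)\mathcal{Q}_n(\lambda)+\frac{\tau_{n-1}q_{n+1}}{q_n}\lambda\,\mathcal{Q}_{n-1}(\lambda),\quad n\ge2,$$ with $\mathcal{Q}_1(\lambda)=\rho_0(\lambda+\alpha_1\rho_0^{-1}-\beta_0)$ and $\mathcal{Q}_0(\lambda)=1$.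
   Context: This is the case $\gamma_n=0$ (equivalently, after a shift of variable, $\gamma_n$ constant) of $R_I$ type recurrence relations $\mathcal{P}_{n+1}=\rho_n(\lambda-\beta_n)\mathcal{P}_n+\tau_n(\lambda-\gamma_n)\mathcal{P}_{n-1}$. The paper makes the standing assumptions $p_{n+1}\neq0$, $q_n\neq0$, $n\ge1$, in this setting. *)

theory Defs
  imports Complex_Main
begin

fun RP :: "(nat \<Rightarrow> complex) \<Rightarrow> (nat \<Rightarrow> complex) \<Rightarrow> (nat \<Rightarrow> complex) \<Rightarrow> nat \<Rightarrow> complex \<Rightarrow> complex" where
  "RP \<rho> \<beta> \<tau> 0 x = 1"
| "RP \<rho> \<beta> \<tau> (Suc 0) x = \<rho> 0 * (x - \<beta> 0)"
| "RP \<rho> \<beta> \<tau> (Suc (Suc n)) x =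
     \<rho> (Suc n) * (x - \<beta> (Suc n)) * RP \<rho> \<beta> \<tau> (Suc n) x + \<tau> (Suc n) * x * RP \<rho> \<beta> \<tau> n x"

definition RQ :: "(nat \<Rightarrow> complex) \<Rightarrow> (nat \<Rightarrow> complex) \<Rightarrow> (nat \<Rightarrow> complex) \<Rightarrow> (nat \<Rightarrow> real) \<Rightarrow> nat \<Rightarrow> complex \<Rightarrow> complex" where
  "RQ \<rho> \<beta> \<tau> \<alpha> n x = (if n = 0 then 1
     else RP \<rho> \<beta> \<tau> n x + complex_of_real (\<alpha> n) * RP \<rho> \<beta> \<tau> (n - 1) x)"

definition cp :: "(nat \<Rightarrow> complex) \<Rightarrow> (nat \<Rightarrow> complex) \<Rightarrow> (nat \<Rightarrow> real) \<Rightarrow> nat \<Rightarrow> complex" where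
  "cp \<rho> \<tau> \<alpha> n = complex_of_real (\<alpha> (n - 1)) * \<rho> (n - 1) - \<tau> (n - 1)"

definition cq :: "(nat \<Rightarrow> complex) \<Rightarrow> (nat \<Rightarrow> complex) \<Rightarrow> (nat \<Rightarrow> real) \<Rightarrow> nat \<Rightarrow> complex" where
  "cq \<rho> \<beta> \<alpha> n = complex_of_real (\<alpha> (n - 1)) *
      (complex_of_real (\<alpha> n) - \<rho> (n - 1) * \<beta> (n - 1))"

definition cr :: "(nat \<Rightarrow> complex) \<Rightarrow> (nat \<Rightarrow> complex) \<Rightarrow> (nat \<Rightarrow> real) \<Rightarrow> nat \<Rightarrow> complex" where
  "cr \<rho> \<tau> \<alpha> n = \<rho> n * cp \<rho> \<tau> \<alpha> n"

definition cs :: "(nat \<Rightarrow> complex) \<Rightarrow> (nat \<Rightarrow> complex) \<Rightarrow> (nat \<Rightarrow> complex) \<Rightarrow> (nat \<Rightarrow> real) \<Rightarrow> nat \<Rightarrow> complex" where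
  "cs \<rho> \<beta> \<tau> \<alpha> n = inverse (complex_of_real (\<alpha> n)) * cp \<rho> \<tau> \<alpha> n * cq \<rho> \<beta> \<alpha> (n + 1)
     + complex_of_real (\<alpha> (n - 1)) * (\<tau> n - \<rho> (n - 1) * \<beta> (n - 1) * \<rho> n)"

definition ct :: "(nat \<Rightarrow> complex) \<Rightarrow> (nat \<Rightarrow> complex) \<Rightarrow> (nat \<Rightarrow> real) \<Rightarrow> nat \<Rightarrow> complex" where
  "ct \<rho> \<beta> \<alpha> n = - inverse (complex_of_real (\<alpha> n)) * complex_of_real (\<alpha> (n - 1))
     * \<rho> (n - 1) * \<beta> (n - 1) * cq \<rho> \<beta> \<alpha> (n + 1)"

end

theory Submission
  imports Defs
begin


lemma T1g: "B \<noteq> 0 \<Longrightarrow> a \<noteq> 0 \<Longrightarrow> d \<noteq> 0 \<Longrightarrow> rn \<noteq> 0 \<Longrightarrow>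
  (- inverse B * a * rp * bp * (B*e)) / (rn*(- (a*d))) = rp*bp*e / (rn*(d::complex))"
  by (simp add: field_simps)
lemma gen0:
  fixes rp bp rn bn a d c P0 P1 x :: complex
  assumes  a0: "a \<noteq> 0" and b0: "d + rp*bp \<noteq> 0" and qn0: "d \<noteq> 0" and rn0: "rn \<noteq> 0"
  shows "rn*(x-bn)*(rp*(x-bp)*P1 + (a*d + a*rp)*x*P0) + ((d + rp*bp)*c - (d + rp*bp)*rn*bn + (d + rp*bp)*rn)*x*P1 + c*(rp*(x-bp)*P1 + (a*d + a*rp)*x*P0)
     = rn*(x - (- inverse (d + rp*bp) * a * rp * bp * ((d + rp*bp)*(c - rn*bn))) / (rn*(- (a*d)))) * ((rp*(x-bp)*P1 + (a*d + a*rp)*x*P0) + (d + rp*bp)*P1)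
       + (a*d + a*rp) * ((d + rp*bp)*(c - rn*bn)) / (a*d) * x * (P1 + a*P0)"
proof -
  have T1: "(- inverse (d + rp*bp) * a * rp * bp * ((d + rp*bp)*(c - rn*bn))) / (rn*(- (a*d)))
     = rp*bp*(c - rn*bn) / (rn*d)" by (rule T1g[OF b0 a0 qn0 rn0])
  have T2: "(a*d + a*rp) * ((d + rp*bp)*(c - rn*bn)) / (a*d) = (d+rp)*(d + rp*bp)*(c - rn*bn)/d"
    using a0 b0 qn0 rn0 by (simp add: field_simps)
  show ?thesis unfolding T1 T2 using qn0 rn0
    by (simp add: field_simps)
qed

lemma gen1:
  fixes rp bp tp rn bn tn a b c P0 P1 P2 P3 x :: complex
  assumes a0: "a \<noteq> 0" and b0: "b \<noteq> 0" and d0: "b - rp*bp \<noteq> 0" and rn0: "rn \<noteq> 0"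
    and hb: "b = -(rp - inverse a * tp) + rp*bp" and hc: "c = -(rn - inverse b * tn) + rn*bn"
    and P2d: "P2 = rp*(x-bp)*P1 + tp*x*P0" and P3d: "P3 = rn*(x-bn)*P2 + tn*x*P1"
  shows "P3 + c*P2 = rn*(x - (- inverse b * a * rp*bp*(b*(c - rn*bn)))/(rn*(a*rp - tp)))*(P2 + b*P1)
     + tp*(b*(c - rn*bn))/(a*(b - rp*bp))*x*(P1 + a*P0)"
proof -
  define d where "d = b - rp*bp"
  have bd: "b = d + rp*bp" unfolding d_def by simp
  have tpd: "tp = a*d + a*rp" using hb a0 unfolding d_def by (simp add: field_simps)
  have tnd: "tn = b*c - b*rn*bn + b*rn" using hc b0 by (simp add: field_simps)
  have E1: "a*rp - tp = -(a*d)" using tpd by simp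
  have E2: "b - rp*bp = d" unfolding d_def ..
  show ?thesis unfolding P3d P2d E1 E2 unfolding tnd tpd unfolding bd
    by (rule gen0[OF a0 _ _ rn0]) (use b0 bd d0 E2 in simp_all)
qed

lemma case2:
  fixes r0 b0 t0 r1 b1 t1 a0 a1 a2 x S C T C2 L Q1 :: complex
  assumes S0: "S \<noteq> 0" and C0: "C \<noteq> 0" and a10: "a1 \<noteq> 0" and r00: "r0 \<noteq> 0"
   and Sd: "S = inverse a1 * (a0*r0 - t0) * C2 + a0*(t1 - r0*b0*r1)"
   and Cd: "C = a0*(a1 - r0*b0)" and Td: "T = - inverse a1 * a0 * r0 * b0 * C2"
   and C2d: "C2 = a1*(a2 - r1*b1)"
   and Ld: "L = r1*(x-b1)*(r0*(x-b0)) + t1*x + a2*(r0*(x-b0))"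
   and Q1d: "Q1 = r0*(x-b0) + a1"
   and t0d: "a0 = t0 * inverse r0"
   and hb: "a2 = -(r1 - inverse a1 * t1) + r1*b1"
  shows "L = S/C*(x + T/S)*Q1 - t0*C2/C*x*(x-1)*1"
proof -
  have t0e: "t0 = a0*r0" using t0d r00 by (simp add: field_simps)
  have t1e: "t1 = a1*a2 + a1*r1 - a1*r1*b1" using hb a10 by (simp add: field_simps)
  have Se: "S = a0*(t1 - r0*b0*r1)" using Sd t0e by simp
  have Te: "T = - a0 * r0 * b0 * (a2 - r1*b1)" unfolding Td C2d using a10 by (simp add: field_simps)
  have key: "L*C = S*x*Q1 + T*Q1 - t0*C2*x*(x-1)"
    unfolding Ld Cd Se Te Q1d C2d t0e t1e by algebra
  have "S/C*(x + T/S)*Q1 - t0*C2/C*x*(x-1)*1 = (S*x*Q1 + T*Q1 - t0*C2*x*(x-1))/C"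
    using S0 C0 by (simp add: field_simps)
  also have "\<dots> = L" using key C0 by (simp add: field_simps)
  finally show ?thesis by simp
qed
theorem mainTheorem2:
  fixes \<rho> \<beta> \<tau> :: "nat \<Rightarrow> complex" and \<alpha> :: "nat \<Rightarrow> real"
  assumes rho_nz: "\<And>n. \<rho> n \<noteq> 0"
    and tau_nz: "\<And>n. \<tau> n \<noteq> 0"
    and beta0: "\<beta> 0 \<noteq> 0" "\<beta> 0 \<noteq> 1" "\<beta> 0 \<noteq> -1"
    and beta_nz: "\<And>n. n \<ge> 1 \<Longrightarrow> \<beta> n \<noteq> 0"
    and alpha_nz: "\<And>n. \<alpha> n \<noteq> 0"
    and p_nz: "\<And>n. n \<ge> 1 \<Longrightarrow> cp \<rho> \<tau> \<alpha> (n + 1) \<noteq> 0"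
    and q_nz: "\<And>n. n \<ge> 1 \<Longrightarrow> cq \<rho> \<beta> \<alpha> n \<noteq> 0"
    and alpha_rec: "\<And>n. n \<ge> 2 \<Longrightarrow> complex_of_real (\<alpha> n) =
         - (\<rho> (n - 1) - inverse (complex_of_real (\<alpha> (n - 1))) * \<tau> (n - 1)) + \<rho> (n - 1) * \<beta> (n - 1)"
    and alpha1: "complex_of_real (\<alpha> 1) \<noteq> \<rho> 0 * \<beta> 0"
    and alpha0: "complex_of_real (\<alpha> 0) = \<tau> 0 * inverse (\<rho> 0)"
    and s1_nz: "cs \<rho> \<beta> \<tau> \<alpha> 1 \<noteq> 0"
  shows "\<forall>x::complex.
      RQ \<rho> \<beta> \<tau> \<alpha> 2 x =
        cs \<rho> \<beta> \<tau> \<alpha> 1 / cq \<rho> \<beta> \<alpha> 1 * (x + ct \<rho> \<beta> \<alpha> 1 / cs \<rho> \<beta> \<tau> \<alpha> 1) * RQ \<rho> \<beta> \<tau> \<alpha> 1 x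
        - \<tau> 0 * cq \<rho> \<beta> \<alpha> 2 / cq \<rho> \<beta> \<alpha> 1 * x * (x - 1) * RQ \<rho> \<beta> \<tau> \<alpha> 0 x
    \<and> (\<forall>n\<ge>2. RQ \<rho> \<beta> \<tau> \<alpha> (n + 1) x =
        \<rho> n * (x - ct \<rho> \<beta> \<alpha> n / cr \<rho> \<tau> \<alpha> n) * RQ \<rho> \<beta> \<tau> \<alpha> n x
        + \<tau> (n - 1) * cq \<rho> \<beta> \<alpha> (n + 1) / cq \<rho> \<beta> \<alpha> n * x * RQ \<rho> \<beta> \<tau> \<alpha> (n - 1) x)
    \<and> RQ \<rho> \<beta> \<tau> \<alpha> 1 x = \<rho> 0 * (x + complex_of_real (\<alpha> 1) * inverse (\<rho> 0) - \<beta> 0)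
    \<and> RQ \<rho> \<beta> \<tau> \<alpha> 0 x = 1"
proof (rule allI, intro conjI)
  fix x :: complex
  show "RQ \<rho> \<beta> \<tau> \<alpha> 0 x = 1" by (simp add: RQ_def)
  show "RQ \<rho> \<beta> \<tau> \<alpha> 1 x = \<rho> 0 * (x + complex_of_real (\<alpha> 1) * inverse (\<rho> 0) - \<beta> 0)"
    using rho_nz[of 0] by (simp add: RQ_def field_simps)
  show "RQ \<rho> \<beta> \<tau> \<alpha> 2 x =
        cs \<rho> \<beta> \<tau> \<alpha> 1 / cq \<rho> \<beta> \<alpha> 1 * (x + ct \<rho> \<beta> \<alpha> 1 / cs \<rho> \<beta> \<tau> \<alpha> 1) * RQ \<rho> \<beta> \<tau> \<alpha> 1 x
        - \<tau> 0 * cq \<rho> \<beta> \<alpha> 2 / cq \<rho> \<beta> \<alpha> 1 * x * (x - 1) * RQ \<rho> \<beta> \<tau> \<alpha> 0 x"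
  proof -
    have ar: "complex_of_real (\<alpha> 2) = - (\<rho> 1 - inverse (complex_of_real (\<alpha> 1)) * \<tau> 1) + \<rho> 1 * \<beta> 1"
      using alpha_rec[of 2] by simp
    have "RQ \<rho> \<beta> \<tau> \<alpha> 2 x =
        cs \<rho> \<beta> \<tau> \<alpha> 1 / cq \<rho> \<beta> \<alpha> 1 * (x + ct \<rho> \<beta> \<alpha> 1 / cs \<rho> \<beta> \<tau> \<alpha> 1) * RQ \<rho> \<beta> \<tau> \<alpha> 1 x
        - \<tau> 0 * cq \<rho> \<beta> \<alpha> 2 / cq \<rho> \<beta> \<alpha> 1 * x * (x - 1) * 1"
    proof (rule case2[OF s1_nz q_nz[of 1] _ rho_nz[of 0] _ _ _ _ _ _ alpha0 ar])
      show "complex_of_real (\<alpha> 1) \<noteq> 0" using alpha_nz[of 1] by simp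
    qed (auto simp add: cs_def cq_def ct_def cp_def RQ_def numeral_2_eq_2 algebra_simps)
    then show ?thesis by (simp add: RQ_def)
  qed
  show "\<forall>n\<ge>2. RQ \<rho> \<beta> \<tau> \<alpha> (n + 1) x =
        \<rho> n * (x - ct \<rho> \<beta> \<alpha> n / cr \<rho> \<tau> \<alpha> n) * RQ \<rho> \<beta> \<tau> \<alpha> n x
        + \<tau> (n - 1) * cq \<rho> \<beta> \<alpha> (n + 1) / cq \<rho> \<beta> \<alpha> n * x * RQ \<rho> \<beta> \<tau> \<alpha> (n - 1) x"
  proof (intro allI impI)
    fix n :: nat assume n2: "n \<ge> 2"
    then obtain m where nm: "n = Suc (Suc m)" by (metis add_2_eq_Suc le_Suc_ex)
    have ar1: "complex_of_real (\<alpha> n) = - (\<rho> (Suc m) - inverse (complex_of_real (\<alpha> (Suc m))) * \<tau> (Suc m)) + \<rho> (Suc m) * \<beta> (Suc m)"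
      using alpha_rec[of n] n2 nm by simp
    have ar2: "complex_of_real (\<alpha> (Suc n)) = - (\<rho> n - inverse (complex_of_real (\<alpha> n)) * \<tau> n) + \<rho> n * \<beta> n"
      using alpha_rec[of "Suc n"] n2 by simp
    have qn: "complex_of_real (\<alpha> n) - \<rho> (Suc m) * \<beta> (Suc m) \<noteq> 0"
      using q_nz[of n] n2 nm by (simp add: cq_def)
    have an: "complex_of_real (\<alpha> n) \<noteq> 0" using alpha_nz[of n] by simp
    have am: "complex_of_real (\<alpha> (Suc m)) \<noteq> 0" using alpha_nz[of "Suc m"] by simp
    have "RP \<rho> \<beta> \<tau> (Suc n) x + complex_of_real (\<alpha> (Suc n)) * RP \<rho> \<beta> \<tau> n x =
       \<rho> n * (x - (- inverse (complex_of_real (\<alpha> n)) * complex_of_real (\<alpha> (Suc m)) * \<rho> (Suc m) * \<beta> (Suc m)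
            * (complex_of_real (\<alpha> n) * (complex_of_real (\<alpha> (Suc n)) - \<rho> n * \<beta> n)))
          / (\<rho> n * (complex_of_real (\<alpha> (Suc m)) * \<rho> (Suc m) - \<tau> (Suc m))))
       * (RP \<rho> \<beta> \<tau> n x + complex_of_real (\<alpha> n) * RP \<rho> \<beta> \<tau> (Suc m) x)
       + \<tau> (Suc m) * (complex_of_real (\<alpha> n) * (complex_of_real (\<alpha> (Suc n)) - \<rho> n * \<beta> n))
          / (complex_of_real (\<alpha> (Suc m)) * (complex_of_real (\<alpha> n) - \<rho> (Suc m) * \<beta> (Suc m)))
          * x * (RP \<rho> \<beta> \<tau> (Suc m) x + complex_of_real (\<alpha> (Suc m)) * RP \<rho> \<beta> \<tau> m x)"
      by (rule gen1[OF am an qn rho_nz ar1 ar2]) (simp_all add: nm)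
    then show "RQ \<rho> \<beta> \<tau> \<alpha> (n + 1) x =
        \<rho> n * (x - ct \<rho> \<beta> \<alpha> n / cr \<rho> \<tau> \<alpha> n) * RQ \<rho> \<beta> \<tau> \<alpha> n x
        + \<tau> (n - 1) * cq \<rho> \<beta> \<alpha> (n + 1) / cq \<rho> \<beta> \<alpha> n * x * RQ \<rho> \<beta> \<tau> \<alpha> (n - 1) x"
      using nm by (simp add: RQ_def ct_def cr_def cp_def cq_def)
  qed
qed

end
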